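(* Let $\gamma>1$. There exist an integer $n_0(\gamma)$ and a constant $a(\gamma)>0$ such that for every $n\ge n_0(\gamma)$ the unique negative root $\lambda_n$ of $$g_n(\lambda)=\frac{1}{\lambda}+\frac{\frac{d}{d\lambda}h^{(1)}_n(-i\lambda)}{h^{(1)}_n(-i\lambda)}-\gamma=0$$ satisfies $$\Bigl|\lambda_n+\sqrt{\tfrac{n(n+1)}{\gamma^2-1}}\Bigr|\le a(\gamma).$$
   Context: $h^{(1)}_n$ is the spherical Hankel function of the first kind; for $\lambda<0$, $h^{(1)}_n(-i\lambda)=(-i)^n\frac{e^{\lambda}}{\lambda}R_n(-\frac{1}{2\lambda})$ (up to an $n$-independent constant) with $R_n(w)=\sum_{m=0}^n\frac{(n+m)!}{m!(n-m)!}w^m$; $\frac{d}{d\lambda}h^{(1)}_n(-i\lambda)$ is the derivative of $\lambda\mapsto h^{(1)}_n(-i\lambda)$. For $\gamma>1$ and $n\ge1$, $g_n$ has exactly one root in $(-\infty,0)$. *)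

theory Defs
  imports "HOL-Analysis.Analysis"
begin

definition Rpoly :: "nat \<Rightarrow> real \<Rightarrow> real" where
  "Rpoly n w = (\<Sum>m\<le>n. (fact (n + m) / (fact m * fact (n - m))) * w ^ m)"

text \<open>The map lambda |-> h^(1)_n(-i lambda) for lambda < 0, given by the closed form
  h^(1)_n(-i lambda) = (-i)^n e^lambda / lambda R_n(-1/(2 lambda)).\<close>
definition hankel_neg :: "nat \<Rightarrow> real \<Rightarrow> complex" where
  "hankel_neg n lam = (- \<i>) ^ n * complex_of_real (exp lam / lam * Rpoly n (- 1 / (2 * lam)))"

definition g_fun :: "real \<Rightarrow> nat \<Rightarrow> real \<Rightarrow> complex" where
  "g_fun \<gamma> n lam = complex_of_real (1 / lam)
      + vector_derivative (hankel_neg n) (at lam) / hankel_neg n lam - complex_of_real \<gamma>"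

end

theory Submission
  imports Defs
begin

definition ac :: "nat \<Rightarrow> nat \<Rightarrow> real" where
  "ac n m = fact (n + m) / (fact m * fact (n - m))"

definition R1 :: "nat \<Rightarrow> real \<Rightarrow> real" where
  "R1 n w = (\<Sum>m\<le>n. ac n m * (real m * w ^ (m - 1)))"

definition R2 :: "nat \<Rightarrow> real \<Rightarrow> real" where
  "R2 n w = (\<Sum>m\<le>n. ac n m * (real m * (real (m - 1) * w ^ (m - 1 - 1))))"

lemma Rpoly_ac: "Rpoly n w = (\<Sum>m\<le>n. ac n m * w ^ m)"
  by (simp add: Rpoly_def ac_def)

lemma ac_pos: "m \<le> n \<Longrightarrow> ac n m > 0"
  by (simp add: ac_def)

lemma ac_rec: assumes "m < n"
  shows "real (Suc m) * ac n (Suc m) = real (n - m) * real (n + m + 1) * ac n m"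
proof -
  obtain k where n: "n = Suc (m + k)" using assms less_iff_Suc_add by auto
  have e1: "fact (n + Suc m) = real (n+m+1) * (fact (n+m) :: real)"
    by (simp add: algebra_simps)
  have e2: "fact (Suc m) = real (Suc m) * (fact m :: real)" by simp
  have e3: "fact (n - m) = real (Suc k) * (fact k :: real)" "n - Suc m = k" "n - m = Suc k"
    using n by auto
  have f: "(fact m :: real) > 0" "(fact k :: real) > 0" by auto
  have "real (Suc m) * ac n (Suc m) = real (n+m+1) * fact (n+m) / (fact m * fact k)"
    unfolding ac_def e1 e2 e3 using f by (simp add: field_simps del: of_nat_Suc)
  also have "\<dots> = real (n - m) * real (n + m + 1) * ac n m"
    unfolding ac_def e3 using f by (simp add: field_simps del: of_nat_Suc)
  finally show ?thesis .
qed

lemma DERIV_R: "(Rpoly n has_real_derivative R1 n w) (at w)"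
proof -
  have "((\<lambda>w. \<Sum>m\<le>n. ac n m * w ^ m) has_real_derivative R1 n w) (at w)"
    unfolding R1_def by (intro derivative_eq_intros) auto
  then show ?thesis by (simp add: Rpoly_ac[abs_def])
qed

lemma DERIV_R1: "(R1 n has_real_derivative R2 n w) (at w)"
proof -
  have "((\<lambda>w. \<Sum>m\<le>n. ac n m * (real m * w ^ (m - 1))) has_real_derivative R2 n w) (at w)"
    unfolding R2_def by (intro derivative_eq_intros) auto
  then show ?thesis by (simp add: R1_def[abs_def])
qed

lemma R1_shift: "R1 n w = (\<Sum>m<n. real (n - m) * real (n + m + 1) * ac n m * w ^ m)"
proof (cases n)
  case 0 then show ?thesis by (simp add: R1_def)
next
  case (Suc k)
  have "R1 n w = (\<Sum>m\<le>k. ac n (Suc m) * (real (Suc m) * w ^ m))"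
    unfolding R1_def Suc sum.atMost_Suc_shift by simp
  also have "\<dots> = (\<Sum>m<n. real (n - m) * real (n + m + 1) * ac n m * w ^ m)"
    unfolding Suc lessThan_Suc_atMost[symmetric]
    by (intro sum.cong refl) (metis Suc ac_rec lessThan_iff mult.commute mult.left_commute)
  finally show ?thesis .
qed

lemma R_ode: "w\<^sup>2 * R2 n w + (2 * w + 1) * R1 n w = real n * (real n + 1) * Rpoly n w"
proof -
  have a: "w\<^sup>2 * R2 n w + 2 * w * R1 n w = (\<Sum>m\<le>n. real m * (real m + 1) * ac n m * w ^ m)"
    unfolding R2_def R1_def sum_distrib_left sum.distrib[symmetric]
  proof (intro sum.cong refl)
    fix m assume "m \<in> {..n}"
    show "w\<^sup>2 * (ac n m * (real m * (real (m - 1) * w ^ (m - 1 - 1)))) + 2 * w * (ac n m * (real m * w ^ (m - 1)))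
       = real m * (real m + 1) * ac n m * w ^ m"
    proof (cases "m \<ge> 2")
      case True
      then obtain j where j: "m = Suc (Suc j)" by (metis add_2_eq_Suc le_Suc_ex)
      show ?thesis unfolding j by (simp add: power2_eq_square algebra_simps)
    next
      case False
      then have "m = 0 \<or> m = 1" by auto
      then show ?thesis by auto
    qed
  qed
  have b: "(\<Sum>m\<le>n. real m * (real m + 1) * ac n m * w ^ m) + R1 n w
      = (\<Sum>m\<le>n. real n * (real n + 1) * ac n m * w ^ m)"
    unfolding R1_shift lessThan_Suc_atMost[symmetric] sum.lessThan_Suc
  proof -
    have "(\<Sum>m<n. real m * (real m + 1) * ac n m * w ^ m) + (\<Sum>m<n. real (n - m) * real (n + m + 1) * ac n m * w ^ m)
       = (\<Sum>m<n. real n * (real n + 1) * ac n m * w ^ m)"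
      unfolding sum.distrib[symmetric]
    proof (intro sum.cong refl)
      fix m assume "m \<in> {..<n}"
      then have "m \<le> n" by auto
      then show "real m * (real m + 1) * ac n m * w ^ m + real (n - m) * real (n + m + 1) * ac n m * w ^ m =
         real n * (real n + 1) * ac n m * w ^ m"
        by (simp add: of_nat_diff algebra_simps)
    qed
    then show "(\<Sum>m<n. real m * (real m + 1) * ac n m * w ^ m) + real n * (real n + 1) * ac n n * w ^ n +
    (\<Sum>m<n. real (n - m) * real (n + m + 1) * ac n m * w ^ m) =
    (\<Sum>m<n. real n * (real n + 1) * ac n m * w ^ m) + real n * (real n + 1) * ac n n * w ^ n"
      by linarith
  qed
  have c: "real n * (real n + 1) * Rpoly n w = (\<Sum>m\<le>n. real n * (real n + 1) * ac n m * w ^ m)"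
    unfolding Rpoly_ac sum_distrib_left by (simp add: mult.assoc)
  show ?thesis using a b c by (simp add: algebra_simps)
qed


lemma R_ge1: assumes "w \<ge> 0" shows "Rpoly n w \<ge> 1"
proof -
  have "Rpoly n w = (\<Sum>m\<in>insert 0 {1..n}. ac n m * w ^ m)"
    unfolding Rpoly_ac by (intro sum.cong) auto
  also have "\<dots> = 1 + (\<Sum>m\<in>{1..n}. ac n m * w ^ m)"
    by (simp add: ac_def)
  also have "\<dots> \<ge> 1"
    using assms by (auto intro!: sum_nonneg simp: ac_def)
  finally show ?thesis .
qed

lemma R1_ge0: assumes "w \<ge> 0" shows "R1 n w \<ge> 0"
  unfolding R1_def using assms by (auto intro!: sum_nonneg simp: ac_def)

definition sf :: "nat \<Rightarrow> real \<Rightarrow> real" where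
  "sf n w = 2 * w\<^sup>2 * R1 n w / Rpoly n w"

lemma sf_ge0: "w \<ge> 0 \<Longrightarrow> sf n w \<ge> 0"
  unfolding sf_def using R_ge1[of w n] R1_ge0[of w n] by auto

lemma alg_aux:
  fixes A R P w N :: real
  assumes "A = 2 * N * R - 2 * P" "R \<ge> 1" "w > 0"
  shows "(A * R - 2 * w\<^sup>2 * P * P) / R\<^sup>2 = (4 * N * w\<^sup>2 - (2 * w\<^sup>2 * P / R)\<^sup>2 - 2 * (2 * w\<^sup>2 * P / R)) / (2 * w\<^sup>2)"
proof -
  have "(A * R - 2 * w\<^sup>2 * P * P) / R\<^sup>2 = 2 * N - 2 * P / R - 2 * w\<^sup>2 * P\<^sup>2 / R\<^sup>2"
    unfolding assms(1) using assms(2,3) by (simp add: field_simps power2_eq_square)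
  also have "\<dots> = (4 * N * w\<^sup>2 - (2 * w\<^sup>2 * P / R)\<^sup>2 - 2 * (2 * w\<^sup>2 * P / R)) / (2 * w\<^sup>2)"
    using assms by (simp add: field_simps power2_eq_square)
  finally show ?thesis .
qed

lemma DERIV_sf: assumes "w > 0"
  shows "(sf n has_real_derivative (4 * real n * (real n + 1) * w\<^sup>2 - (sf n w)\<^sup>2 - 2 * sf n w) / (2 * w\<^sup>2)) (at w)"
proof -
  have R: "Rpoly n w \<ge> 1" using R_ge1[of w n] assms by auto
  have d: "(sf n has_real_derivative
     ((4 * w * R1 n w + 2 * w\<^sup>2 * R2 n w) * Rpoly n w - 2 * w\<^sup>2 * R1 n w * R1 n w) / (Rpoly n w)\<^sup>2) (at w)"
    unfolding sf_def[abs_def] using R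
    by (auto intro!: derivative_eq_intros DERIV_R DERIV_R1 simp: power2_eq_square algebra_simps)
  have o: "w\<^sup>2 * R2 n w = real n * (real n + 1) * Rpoly n w - (2 * w + 1) * R1 n w"
    using R_ode[of w n] by linarith
  have "((4 * w * R1 n w + 2 * w\<^sup>2 * R2 n w) * Rpoly n w - 2 * w\<^sup>2 * R1 n w * R1 n w) / (Rpoly n w)\<^sup>2
     = (4 * real n * (real n + 1) * w\<^sup>2 - (sf n w)\<^sup>2 - 2 * sf n w) / (2 * w\<^sup>2)"
  proof -
    have "(4 * w * R1 n w + 2 * w\<^sup>2 * R2 n w) = 2 * real n * (real n + 1) * Rpoly n w - 2 * R1 n w"
      using o by (simp add: algebra_simps)
    then show ?thesis unfolding sf_def using R assms
      by (simp add: alg_aux)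
  qed
  with d show ?thesis by simp
qed


lemma cont_sf: "continuous_on {0..} (sf n)"
proof -
  have c1: "continuous_on {0..} (Rpoly n)"
    using DERIV_R by (meson DERIV_isCont continuous_at_imp_continuous_on)
  have c2: "continuous_on {0..} (R1 n)"
    using DERIV_R1 by (meson DERIV_isCont continuous_at_imp_continuous_on)
  show ?thesis unfolding sf_def[abs_def]
  proof (intro continuous_intros c1 c2 ballI)
    fix w :: real assume "w \<in> {0..}"
    then show "Rpoly n w \<noteq> 0" using R_ge1[of w n] by auto
  qed
qed

lemma cmp_lemma:
  fixes f :: "real \<Rightarrow> real"
  assumes cont: "continuous_on {a..b} f" and fa: "f a \<ge> 0" and ab: "a < b"
    and der: "\<forall>x\<in>{a<..b}. f x \<le> 0 \<longrightarrow> (\<exists>d>0. (f has_real_derivative d) (at x))"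
  shows "f b > 0"
proof (rule ccontr)
  assume nb: "\<not> f b > 0"
  have key: False if m: "m \<in> {a<..b}" "f m \<le> 0" "\<forall>y\<in>{a..b}. f m \<le> f y" for m
  proof -
    obtain d where d: "d > 0" "(f has_real_derivative d) (at m)" using der m by blast
    obtain e where e: "e > 0" "\<forall>h>0. h < e \<longrightarrow> f (m - h) < f m"
      using DERIV_pos_inc_left[OF d(2) d(1)] by blast
    define h where "h = min (e/2) ((m - a)/2)"
    have h: "h > 0" "h < e" "m - h \<in> {a..b}" using e m unfolding h_def by (auto simp: min_def field_simps)
    then have "f (m - h) < f m" using e by auto
    moreover have "f m \<le> f (m - h)" using m(3) h by auto
    ultimately show False by simp
  qed
  obtain m where m: "m \<in> {a..b}" "\<forall>y\<in>{a..b}. f m \<le> f y"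
    using continuous_attains_inf[OF compact_Icc _ cont] ab by fastforce
  show False
  proof (cases "m = a")
    case True
    have "f b \<ge> f a" using m True ab by auto
    then have "\<forall>y\<in>{a..b}. f b \<le> f y" using m True nb fa by force
    then show False using key[of b] ab nb by auto
  next
    case False
    then have "m \<in> {a<..b}" using m by auto
    moreover have "f m \<le> f b" using m(2) ab by auto
    then have "f m \<le> 0" using nb by linarith
    ultimately show False using key m by blast
  qed
qed


lemma sf0: "sf n 0 = 0" by (simp add: sf_def)

lemma upper_bd:
  assumes w: "w > 0" and n: "n \<ge> 1"
  shows "(sf n w)\<^sup>2 + 2 * sf n w < 4 * (real n * (real n + 1)) * w\<^sup>2"
proof -
  define N where "N = real n * (real n + 1)"
  have N: "N > 0" using n unfolding N_def by auto
  define T where "T x = 4 * N * x\<^sup>2 - (sf n x)\<^sup>2 - 2 * sf n x" for x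
  have "T w > 0"
  proof (rule cmp_lemma[where a = 0 and b = w and f = T])
    show "continuous_on {0..w} T" unfolding T_def[abs_def]
      by (intro continuous_intros continuous_on_subset[OF cont_sf]) auto
    show "T 0 \<ge> 0" by (simp add: T_def sf0)
    show "0 < w" by fact
    show "\<forall>x\<in>{0<..w}. T x \<le> 0 \<longrightarrow> (\<exists>d>0. (T has_real_derivative d) (at x))"
    proof (intro ballI impI)
      fix x assume x: "x \<in> {0<..w}" and Tx: "T x \<le> 0"
      have ds: "(sf n has_real_derivative T x / (2 * x\<^sup>2)) (at x)"
        using DERIV_sf[of x n] x unfolding T_def N_def by (auto simp: mult.assoc)
      define D where "D = T x / (2 * x\<^sup>2)"
      have "((\<lambda>x. 4 * N * x\<^sup>2 - (sf n x)\<^sup>2 - 2 * sf n x) has_real_derivative 8 * N * x - 2 * sf n x * D - 2 * D) (at x)"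
        using ds[folded D_def] by (auto intro!: derivative_eq_intros)
      moreover have Teq: "T = (\<lambda>x. 4 * N * x\<^sup>2 - (sf n x)\<^sup>2 - 2 * sf n x)"
        by (rule ext) (simp add: T_def)
      ultimately have dT: "(T has_real_derivative 8 * N * x - 2 * sf n x * (T x / (2 * x\<^sup>2)) - 2 * (T x / (2 * x\<^sup>2))) (at x)"
        unfolding D_def by metis
      have sp: "sf n x \<ge> 0" using sf_ge0 x by auto
      have x2: "x\<^sup>2 > 0" using x by auto
      have "(2 * sf n x + 2) * (T x / (2 * x\<^sup>2)) \<le> 0"
        using sp x2 Tx by (intro mult_nonneg_nonpos) (auto simp: divide_nonpos_pos)
      then have "8 * N * x - 2 * sf n x * (T x / (2 * x\<^sup>2)) - 2 * (T x / (2 * x\<^sup>2)) > 0"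
      proof -
        have "8 * N * x > 0" using N x by auto
        moreover have "2 * sf n x * (T x / (2 * x\<^sup>2)) + 2 * (T x / (2 * x\<^sup>2)) = (2 * sf n x + 2) * (T x / (2 * x\<^sup>2))"
          by (rule distrib_right[symmetric])
        ultimately show ?thesis using \<open>(2 * sf n x + 2) * (T x / (2 * x\<^sup>2)) \<le> 0\<close> by linarith
      qed
      then show "\<exists>d>0. (T has_real_derivative d) (at x)" using dT by blast
    qed
  qed
  then show ?thesis unfolding T_def N_def by simp
qed


lemma lower_alg:
  fixes s x N E :: real
  assumes x: "x > 0" and N: "N > 0" and E: "E = sqrt (1 + 4 * N * x\<^sup>2)"
    and s0: "s \<ge> 0" and sq: "s \<le> E - 1 - x"
  shows "(4 * N * x\<^sup>2 - s\<^sup>2 - 2 * s) / (2 * x\<^sup>2) - (4 * N * x / E - 1) > 0"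
proof -
  have Ep0: "1 + 4 * N * x\<^sup>2 > 0" using N x by (simp add: add_pos_nonneg)
  have Epos: "E > 0" using E Ep0 by simp
  have E2: "E\<^sup>2 = 1 + 4 * N * x\<^sup>2" using E Ep0 by simp
  have "s * s \<le> (E - 1 - x) * (E - 1 - x)" using s0 sq by (intro mult_mono) auto
  then have "s\<^sup>2 + 2 * s \<le> (E - 1 - x)\<^sup>2 + 2 * (E - 1 - x)"
    using sq by (simp add: power2_eq_square)
  also have "\<dots> = 4 * N * x\<^sup>2 - 2 * E * x + x\<^sup>2"
    using E2 by (simp add: power2_eq_square algebra_simps)
  finally have h1: "4 * N * x\<^sup>2 - s\<^sup>2 - 2 * s \<ge> 2 * E * x - x\<^sup>2" by linarith
  have x2: "2 * x\<^sup>2 > 0" using x by auto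
  have h2: "(4 * N * x\<^sup>2 - s\<^sup>2 - 2 * s) / (2 * x\<^sup>2) \<ge> (2 * E * x - x\<^sup>2) / (2 * x\<^sup>2)"
    using h1 x2 by (simp add: divide_right_mono)
  have h3: "(2 * E * x - x\<^sup>2) / (2 * x\<^sup>2) = E / x - 1/2"
    using x by (simp add: field_simps power2_eq_square)
  have h4: "E / x - 4 * N * x / E = 1 / (x * E)"
    using x Epos E2 by (simp add: field_simps power2_eq_square)
  have "1 / (x * E) > 0" using x Epos by auto
  then show ?thesis using h2 h3 h4 by linarith
qed

lemma lower_bd:
  assumes w: "w > 0" and n: "n \<ge> 1"
  shows "sf n w > sqrt (1 + 4 * (real n * (real n + 1)) * w\<^sup>2) - 1 - w"
proof -
  define N where "N = real n * (real n + 1)"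
  have N: "N > 0" using n unfolding N_def by auto
  define E where "E x = sqrt (1 + 4 * N * x\<^sup>2)" for x
  define D where "D x = sf n x - (E x - 1 - x)" for x
  have "D w > 0"
  proof (rule cmp_lemma[where a = 0 and b = w and f = D])
    show "continuous_on {0..w} D" unfolding D_def[abs_def] E_def
      by (intro continuous_intros continuous_on_subset[OF cont_sf]) auto
    show "D 0 \<ge> 0" by (simp add: D_def E_def sf0)
    show "0 < w" by fact
    show "\<forall>x\<in>{0<..w}. D x \<le> 0 \<longrightarrow> (\<exists>d>0. (D has_real_derivative d) (at x))"
    proof (intro ballI impI)
      fix x assume x: "x \<in> {0<..w}" and Dx: "D x \<le> 0"
      define s' where "s' = (4 * N * x\<^sup>2 - (sf n x)\<^sup>2 - 2 * sf n x) / (2 * x\<^sup>2)"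
      have ds: "(sf n has_real_derivative s') (at x)"
        using DERIV_sf[of x n] x unfolding s'_def N_def by (auto simp: mult.assoc)
      have Ep: "1 + 4 * N * x\<^sup>2 > 0" using N x by (simp add: add_pos_nonneg)
      have dE: "(E has_real_derivative 4 * N * x / E x) (at x)"
        unfolding E_def[abs_def] using Ep
        by (auto intro!: derivative_eq_intros simp: E_def field_simps)
      have dD: "(D has_real_derivative s' - (4 * N * x / E x - 1)) (at x)"
        unfolding D_def[abs_def] using ds dE by (auto intro!: derivative_eq_intros)
      have "s' - (4 * N * x / E x - 1) > 0"
        unfolding s'_def
        by (rule lower_alg) (use x N Dx sf_ge0[of x n] in \<open>auto simp: E_def D_def\<close>)
      then show "\<exists>d>0. (D has_real_derivative d) (at x)" using dD by blast
    qed
  qed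
  then show ?thesis unfolding D_def E_def N_def by simp
qed


lemma DERIV_R_comp:
  "(h has_real_derivative h') (at x within S) \<Longrightarrow>
   ((\<lambda>x. Rpoly n (h x)) has_real_derivative R1 n (h x) * h') (at x within S)"
  by (rule DERIV_chain2[OF DERIV_R])

lemma g_root:
  assumes lam: "lam < 0" and g: "g_fun \<gamma> n lam = 0"
  shows "sf n (-1 / (2 * lam)) = \<gamma> - 1"
proof -
  define F where "F l = exp l / l * Rpoly n (- 1 / (2 * l))" for l
  define w where "w = - 1 / (2 * lam)"
  have wpos: "w > 0" using lam unfolding w_def by (simp add: divide_pos_neg)
  define F' where "F' = (exp lam * lam - exp lam) / lam\<^sup>2 * Rpoly n w + exp lam / lam * (R1 n w * (1 / (2 * lam\<^sup>2)))"
  have dF: "(F has_real_derivative F') (at lam)"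
    unfolding F_def[abs_def] F'_def w_def using lam
    by (auto intro!: derivative_eq_intros DERIV_R_comp simp: field_simps power2_eq_square)
  have hk: "hankel_neg n = (\<lambda>l. (- \<i>) ^ n * complex_of_real (F l))"
    by (rule ext) (simp add: hankel_neg_def F_def)
  have vd: "vector_derivative (hankel_neg n) (at lam) = (- \<i>) ^ n * complex_of_real F'"
    unfolding hk
    by (intro vector_derivative_at has_vector_derivative_mult_right has_vector_derivative_of_real dF)
  have R: "Rpoly n w \<ge> 1" using R_ge1 wpos by auto
  have Fne: "F lam \<noteq> 0" unfolding F_def using lam R w_def by auto
  have c: "(- \<i>) ^ n \<noteq> (0::complex)" by simp
  have "g_fun \<gamma> n lam = complex_of_real (1 / lam + F' / F lam - \<gamma>)"
    unfolding g_fun_def vd unfolding hk using c by simp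
  then have e: "1 / lam + F' / F lam - \<gamma> = 0" using g by (simp del: of_real_diff)
  have "1 / lam + F' / F lam = 1 + R1 n w / (2 * lam\<^sup>2 * Rpoly n w)"
    unfolding F'_def F_def w_def[symmetric] using lam R
    by (simp add: field_simps power2_eq_square)
  moreover have "sf n w = R1 n w / (2 * lam\<^sup>2 * Rpoly n w)"
    unfolding sf_def w_def using lam R by (simp add: field_simps power2_eq_square)
  ultimately show ?thesis using e unfolding w_def by linarith
qed


lemma final_alg:
  fixes x \<gamma> N :: real
  assumes g: "\<gamma> > 1" and N: "N \<ge> 1" and x: "x > 0"
    and up: "(\<gamma>\<^sup>2 - 1) * x\<^sup>2 < N"
    and lo: "(\<gamma>\<^sup>2 - 1) * x\<^sup>2 + \<gamma> * x \<ge> N - 1/4"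
  shows "\<bar>- x + sqrt (N / (\<gamma>\<^sup>2 - 1))\<bar> \<le> (\<gamma> + sqrt (\<gamma>\<^sup>2 - 1)) / (2 * (\<gamma>\<^sup>2 - 1)) + 1"
proof -
  define r where "r = sqrt (\<gamma>\<^sup>2 - 1)"
  define q where "q = sqrt N"
  have c2: "\<gamma>\<^sup>2 - 1 > 0" using g by (simp add: power2_eq_square) (smt (verit) mult_less_cancel_left1)
  have r: "r > 0" "r\<^sup>2 = \<gamma>\<^sup>2 - 1" using c2 unfolding r_def by auto
  have rg: "r < \<gamma>"
  proof -
    have "r\<^sup>2 < \<gamma>\<^sup>2" using r by simp
    then show ?thesis using g r by (smt (verit) power_mono)
  qed
  have q: "q \<ge> 1" "q\<^sup>2 = N" using N unfolding q_def by auto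
  have X0: "sqrt (N / (\<gamma>\<^sup>2 - 1)) = q / r"
    unfolding q_def r_def by (simp add: real_sqrt_divide)
  define a' where "a' = (\<gamma> + r) / (2 * r\<^sup>2)"
  have a'p: "a' > 0" unfolding a'_def using r g by auto
  have upx: "x < q / r"
  proof -
    have "(r * x)\<^sup>2 < q\<^sup>2" using up r q by (simp add: power_mult_distrib)
    then have "r * x < q" using q r x by (smt (verit) power_mono)
    then show ?thesis using r by (simp add: field_simps)
  qed
  have lox: "q / r - x \<le> a'"
  proof (rule ccontr)
    assume "\<not> q / r - x \<le> a'"
    then have xy: "x < q / r - a'" by simp
    define y where "y = q / r - a'"
    have "r\<^sup>2 * x\<^sup>2 + \<gamma> * x < r\<^sup>2 * y\<^sup>2 + \<gamma> * y"
    proof -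
      have "x\<^sup>2 < y\<^sup>2" using xy x unfolding y_def by (simp add: power_strict_mono)
      moreover have "r\<^sup>2 > 0" using r(1) by simp
      ultimately have "r\<^sup>2 * x\<^sup>2 < r\<^sup>2 * y\<^sup>2" by (simp only: mult_less_cancel_left_pos)
      moreover have "\<gamma> * x < \<gamma> * y" using xy g unfolding y_def by simp
      ultimately show ?thesis by linarith
    qed
    also have "r\<^sup>2 * y\<^sup>2 + \<gamma> * y = q\<^sup>2 - q + a' * (r - \<gamma>) / 2"
      unfolding y_def a'_def using r by (simp add: field_simps power2_eq_square)
    also have "\<dots> < q\<^sup>2 - 1/4"
    proof -
      have "a' * (r - \<gamma>) < 0" using a'p rg by (simp add: mult_pos_neg)
      then show ?thesis using q by linarith
    qed
    finally have "r\<^sup>2 * x\<^sup>2 + \<gamma> * x < q\<^sup>2 - 1 / 4" .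
    moreover have "q\<^sup>2 - 1/4 \<le> r\<^sup>2 * x\<^sup>2 + \<gamma> * x" using lo unfolding r(2) q(2) .
    ultimately show False by linarith
  qed
  have "a' = (\<gamma> + sqrt (\<gamma>\<^sup>2 - 1)) / (2 * (\<gamma>\<^sup>2 - 1))" using c2 unfolding a'_def r_def by simp
  then show ?thesis unfolding X0 using upx lox by simp
qed

theorem lemma4p1:
  fixes \<gamma> :: real
  assumes "\<gamma> > 1"
  shows "\<exists>n0::nat. \<exists>a::real. a > 0 \<and>
           (\<forall>n\<ge>n0. \<forall>lam::real. lam < 0 \<longrightarrow> g_fun \<gamma> n lam = 0 \<longrightarrow>
              \<bar>lam + sqrt (real n * (real n + 1) / (\<gamma>\<^sup>2 - 1))\<bar> \<le> a)"
proof (intro exI conjI allI impI)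
  have c2: "\<gamma>\<^sup>2 - 1 > 0" using assms by (simp add: power2_eq_square) (smt (verit) mult_less_cancel_left1)
  show "(\<gamma> + sqrt (\<gamma>\<^sup>2 - 1)) / (2 * (\<gamma>\<^sup>2 - 1)) + 1 > 0"
    using c2 assms by (simp add: add_pos_nonneg)
  fix n :: nat and lam :: real
  assume n: "n \<ge> 1" and lam: "lam < 0" and g: "g_fun \<gamma> n lam = 0"
  define w where "w = -1 / (2 * lam)"
  define N where "N = real n * (real n + 1)"
  define x where "x = - lam"
  have x: "x > 0" using lam x_def by simp
  have wx: "w = 1 / (2 * x)" unfolding w_def x_def by simp
  have wpos: "w > 0" using x wx by simp
  have s: "sf n w = \<gamma> - 1" using g_root[OF lam g] unfolding w_def .
  have n1: "real n \<ge> 1" using n by simp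
  have N1: "N \<ge> 1" unfolding N_def using mult_mono[OF n1, of 1 "real n + 1"] n1 by simp
  have U: "(\<gamma> - 1)\<^sup>2 + 2 * (\<gamma> - 1) < 4 * N * w\<^sup>2"
    using upper_bd[OF wpos n] s unfolding N_def by simp
  have up: "(\<gamma>\<^sup>2 - 1) * x\<^sup>2 < N"
  proof -
    have "\<gamma>\<^sup>2 - 1 < N / x\<^sup>2" using U unfolding wx using x
      by (simp add: field_simps power2_eq_square)
    then show ?thesis using x by (simp add: field_simps)
  qed
  have L: "sqrt (1 + 4 * N * w\<^sup>2) < \<gamma> + w"
    using lower_bd[OF wpos n] s unfolding N_def by simp
  have lo: "(\<gamma>\<^sup>2 - 1) * x\<^sup>2 + \<gamma> * x \<ge> N - 1/4"
  proof -
    have "1 + 4 * N * w\<^sup>2 < (\<gamma> + w)\<^sup>2"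
    proof -
      have "0 \<le> 1 + 4 * N * w\<^sup>2" using N1 by (simp add: add_nonneg_nonneg)
      then have "(sqrt (1 + 4 * N * w\<^sup>2))\<^sup>2 = 1 + 4 * N * w\<^sup>2" by simp
      moreover have "(sqrt (1 + 4 * N * w\<^sup>2))\<^sup>2 < (\<gamma> + w)\<^sup>2"
        using L \<open>0 \<le> 1 + 4 * N * w\<^sup>2\<close> by (intro power_strict_mono) auto
      ultimately show ?thesis by simp
    qed
    then have "1 + N / x\<^sup>2 < (\<gamma> + 1 / (2 * x))\<^sup>2" unfolding wx using x
      by (simp add: field_simps power2_eq_square)
    then have "x\<^sup>2 * (1 + N / x\<^sup>2) < x\<^sup>2 * (\<gamma> + 1 / (2 * x))\<^sup>2" using x by simp
    moreover have "x\<^sup>2 * (1 + N / x\<^sup>2) = x\<^sup>2 + N" using x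
      by (simp add: field_simps)
    moreover have "x\<^sup>2 * (\<gamma> + 1 / (2 * x))\<^sup>2 = \<gamma>\<^sup>2 * x\<^sup>2 + \<gamma> * x + 1/4" using x
      by (simp add: field_simps power2_eq_square)
    ultimately have "x\<^sup>2 + N < \<gamma>\<^sup>2 * x\<^sup>2 + \<gamma> * x + 1/4" by simp
    then show ?thesis by (simp add: algebra_simps)
  qed
  have "lam = - x" unfolding x_def by simp
  then show "\<bar>lam + sqrt (real n * (real n + 1) / (\<gamma>\<^sup>2 - 1))\<bar>
      \<le> (\<gamma> + sqrt (\<gamma>\<^sup>2 - 1)) / (2 * (\<gamma>\<^sup>2 - 1)) + 1"
    using final_alg[OF assms N1 x up lo] unfolding N_def by simp
qed

end
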